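(* Let $\mathcal{H}$ be a Hilbert space and $T$ a (possibly unbounded) self-adjoint operator on $\mathcal{H}$ with domain $D$. Assume there is an orthonormal basis $\{f_n\}_{n\in\mathbb{N}}$ of $\mathcal{H}$ with $f_n\in D$ and sequences $a_n>0$, $b_n\in\mathbb{C}$, $c_n\in\mathbb{R}$ such that $$Tf_n=a_nf_{n+2}+b_nf_{n+1}+c_nf_n+\overline{b_{n-1}}f_{n-1}+a_{n-2}f_{n-2}\qquad(n\in\mathbb{N},\ f_{-1}=f_{-2}=0).$$ Assume the spectrum is $\sigma(T)=\Omega_1\cup\Omega_2$ (disjoint), let $\sigma$ be a positive Borel measure on $\Omega_1$, $\rho$ a positive Borel measure on $\Omega_2$, $V:\Omega_2\to M_2(\mathbb{C})$ measurable with $V(\lambda)$ positive semi-definite $\rho$-a.e., and let $L^2(\mathcal{V})$ be the Hilbert space of functions $f$ with $f|_{\Omega_1}:\Omega_1\to\mathbb{C}$, $f|_{\Omega_2}:\Omega_2\to\mathbb{C}^2$ and inner product $\langle f,g\rangle=\int_{\Omega_1}f\bar g\,d\sigma+\int_{\Omega_2}g(\lambda)^\ast V(\lambda)f(\lambda)\,d\rho(\lambda)$ (modulo null functions). Assume there is a unitary $U:\mathcal{H}\to L^2(\mathcal{V})$ with $UT=MU$, $M$ multiplication by $\lambda$. Define $2\times2$ matrix polynomials $P_n$ by $P_{-1}=0$, $P_0=I$ and $\lambda P_n(\lambda)=A_nP_{n+1}(\lambda)+B_nP_n(\lambda)+A_{n-1}^\ast P_{n-1}(\lambda)$, where $$A_n=\begin{pmatrix}a_{2n}&0\\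 b_{2n+1}&a_{2n+1}\end{pmatrix},\qquad B_n=\begin{pmatrix}c_{2n}&b_{2n}\\ \overline{b_{2n}}&c_{2n+1}\end{pmatrix}.$$ Then for all $n,m\in\mathbb{N}$, $$\int_{\Omega_1}P_n(\lambda)W_1(\lambda)P_m(\lambda)^\ast d\sigma(\lambda)+\int_{\Omega_2}P_n(\lambda)W_2(\lambda)P_m(\lambda)^\ast d\rho(\lambda)=\delta_{nm}I,$$ where, $\sigma$-a.e. on $\Omega_1$, $W_1(\lambda)=\begin{pmatrix}|Uf_0(\lambda)|^2&Uf_0(\lambda)\overline{Uf_1(\lambda)}\\ \overline{Uf_0(\lambda)}Uf_1(\lambda)&|Uf_1(\lambda)|^2\end{pmatrix}$, and, $\rho$-a.e. on $\Omega_2$, $W_2(\lambda)_{i,j}=(Uf_{j-1}(\lambda))^\ast V(\lambda)\,Uf_{i-1}(\lambda)$ for $i,j\in\{1,2\}$.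
   Context: For $\lambda\in\Omega_2$, $Uf(\lambda)\in\mathbb{C}^2$ is a column vector and $(\cdot)^\ast$ is the conjugate transpose; for a matrix polynomial $P$ and real $\lambda$, $P(\lambda)^\ast$ is the conjugate transpose. *)

theory Defs
  imports "HOL-Analysis.Analysis"
begin

class complex_hilbert = ab_group_add +
  fixes scaleC :: "complex \<Rightarrow> 'a \<Rightarrow> 'a" (infixr \<open>*\<^sub>C\<close> 75)
    and cinner :: "'a \<Rightarrow> 'a \<Rightarrow> complex"
  assumes scaleC_add_right: "scaleC c (x + y) = scaleC c x + scaleC c y"
    and scaleC_add_left: "scaleC (c + d) x = scaleC c x + scaleC d x"
    and scaleC_scaleC: "scaleC c (scaleC d x) = scaleC (c * d) x"
    and scaleC_one: "scaleC 1 x = x"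
    and cinner_add_left: "cinner (x + y) z = cinner x z + cinner y z"
    and cinner_scaleC_left: "cinner (scaleC c x) y = c * cinner x y"
    and cinner_commute: "cinner y x = cnj (cinner x y)"
    and cinner_nonneg: "Im (cinner x x) = 0 \<and> 0 \<le> Re (cinner x x)"
    and cinner_eq_zero_iff: "cinner x x = 0 \<longleftrightarrow> x = 0"
    and cinner_complete:
      "(\<forall>e>0. \<exists>N. \<forall>m\<ge>N. \<forall>n\<ge>N. sqrt (Re (cinner (X m - X n) (X m - X n))) < e)
         \<Longrightarrow> \<exists>l. (\<lambda>n. sqrt (Re (cinner (X n - l) (X n - l)))) \<longlonglongrightarrow> 0"

definition cnorm :: "'a::complex_hilbert \<Rightarrow> real" where
  "cnorm x = sqrt (Re (cinner x x))"

definition orthonormal_basis :: "(nat \<Rightarrow> 'a::complex_hilbert) \<Rightarrow> bool" where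
  "orthonormal_basis f \<longleftrightarrow>
     (\<forall>n m. cinner (f n) (f m) = (if n = m then 1 else 0)) \<and>
     (\<forall>x. (\<forall>n. cinner x (f n) = 0) \<longrightarrow> x = 0)"

definition densely_defined_linear :: "('a::complex_hilbert \<Rightarrow> 'a) \<Rightarrow> 'a set \<Rightarrow> bool" where
  "densely_defined_linear T D \<longleftrightarrow>
     0 \<in> D \<and> (\<forall>x\<in>D. \<forall>y\<in>D. x + y \<in> D) \<and> (\<forall>c. \<forall>x\<in>D. c *\<^sub>C x \<in> D) \<and>
     (\<forall>x\<in>D. \<forall>y\<in>D. T (x + y) = T x + T y) \<and> (\<forall>c. \<forall>x\<in>D. T (c *\<^sub>C x) = c *\<^sub>C T x) \<and>
     (\<forall>x. \<forall>e>0. \<exists>d\<in>D. cnorm (x - d) < e)"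

definition adjoint_domain :: "('a::complex_hilbert \<Rightarrow> 'a) \<Rightarrow> 'a set \<Rightarrow> 'a set" where
  "adjoint_domain T D = {y. \<exists>z. \<forall>x\<in>D. cinner (T x) y = cinner x z}"

definition self_adjoint :: "('a::complex_hilbert \<Rightarrow> 'a) \<Rightarrow> 'a set \<Rightarrow> bool" where
  "self_adjoint T D \<longleftrightarrow> densely_defined_linear T D \<and> adjoint_domain T D = D \<and>
     (\<forall>x\<in>D. \<forall>y\<in>D. cinner (T x) y = cinner x (T y))"

definition op_spectrum :: "('a::complex_hilbert \<Rightarrow> 'a) \<Rightarrow> 'a set \<Rightarrow> complex set" where
  "op_spectrum T D = {z. \<not> (bij_betw (\<lambda>x. T x - z *\<^sub>C x) D UNIV \<and>
       (\<exists>C. \<forall>x\<in>D. cnorm x \<le> C * cnorm (T x - z *\<^sub>C x)))}"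

type_synonym cmat2 = "complex^2^2"
type_synonym cvec2 = "complex^2"

definition mk2 :: "complex \<Rightarrow> complex \<Rightarrow> complex \<Rightarrow> complex \<Rightarrow> cmat2" where
  "mk2 p q r s = vector [vector [p, q], vector [r, s]]"

definition adj2 :: "cmat2 \<Rightarrow> cmat2" where
  "adj2 A = (\<chi> i j. cnj (A $ j $ i))"

definition hform :: "cvec2 \<Rightarrow> cmat2 \<Rightarrow> cvec2 \<Rightarrow> complex" where
  "hform v A w = (\<Sum>i\<in>UNIV. cnj (v $ i) * (A *v w) $ i)"

definition psd2 :: "cmat2 \<Rightarrow> bool" where
  "psd2 A \<longleftrightarrow> (\<forall>v. Im (hform v A v) = 0 \<and> 0 \<le> Re (hform v A v))"

text \<open>An element is a pair (g1, g2) with g1 the part on Omega_1 (scalar) and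
  g2 the part on Omega_2 (C^2-valued).  sigma lives on Omega_1, rho on Omega_2.\<close>
type_synonym l2v = "(real \<Rightarrow> complex) \<times> (real \<Rightarrow> cvec2)"

definition L2V_mem :: "real measure \<Rightarrow> real measure \<Rightarrow> (real \<Rightarrow> cmat2) \<Rightarrow> l2v \<Rightarrow> bool" where
  "L2V_mem \<sigma> \<rho> V g \<longleftrightarrow>
     fst g \<in> borel_measurable \<sigma> \<and> integrable \<sigma> (\<lambda>x. (cmod (fst g x))\<^sup>2) \<and>
     snd g \<in> borel_measurable \<rho> \<and> integrable \<rho> (\<lambda>x. hform (snd g x) (V x) (snd g x))"

definition L2V_inner :: "real measure \<Rightarrow> real measure \<Rightarrow> (real \<Rightarrow> cmat2) \<Rightarrow> l2v \<Rightarrow> l2v \<Rightarrow> complex" where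
  "L2V_inner \<sigma> \<rho> V f g =
     (\<integral>x. fst f x * cnj (fst g x) \<partial>\<sigma>) + (\<integral>x. hform (snd g x) (V x) (snd f x) \<partial>\<rho>)"

definition L2V_add :: "l2v \<Rightarrow> l2v \<Rightarrow> l2v" where
  "L2V_add f g = (\<lambda>x. fst f x + fst g x, \<lambda>x. snd f x + snd g x)"

definition L2V_scale :: "complex \<Rightarrow> l2v \<Rightarrow> l2v" where
  "L2V_scale c f = (\<lambda>x. c * fst f x, \<lambda>x. c *s snd f x)"

definition L2V_diff :: "l2v \<Rightarrow> l2v \<Rightarrow> l2v" where
  "L2V_diff f g = (\<lambda>x. fst f x - fst g x, \<lambda>x. snd f x - snd g x)"

text \<open>Equality in L^2(V), i.e. modulo null functions.\<close>
definition L2V_eq :: "real measure \<Rightarrow> real measure \<Rightarrow> (real \<Rightarrow> cmat2) \<Rightarrow> l2v \<Rightarrow> l2v \<Rightarrow> bool" where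
  "L2V_eq \<sigma> \<rho> V f g \<longleftrightarrow> L2V_inner \<sigma> \<rho> V (L2V_diff f g) (L2V_diff f g) = 0"

definition L2V_mult :: "l2v \<Rightarrow> l2v" where
  "L2V_mult f = (\<lambda>x. complex_of_real x * fst f x, \<lambda>x. complex_of_real x *s snd f x)"

definition unitary_to_L2V ::
  "real measure \<Rightarrow> real measure \<Rightarrow> (real \<Rightarrow> cmat2) \<Rightarrow> ('a::complex_hilbert \<Rightarrow> l2v) \<Rightarrow> bool" where
  "unitary_to_L2V \<sigma> \<rho> V U \<longleftrightarrow>
     (\<forall>x. L2V_mem \<sigma> \<rho> V (U x)) \<and>
     (\<forall>x y. L2V_eq \<sigma> \<rho> V (U (x + y)) (L2V_add (U x) (U y))) \<and>
     (\<forall>c x. L2V_eq \<sigma> \<rho> V (U (c *\<^sub>C x)) (L2V_scale c (U x))) \<and>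
     (\<forall>x y. L2V_inner \<sigma> \<rho> V (U x) (U y) = cinner x y) \<and>
     (\<forall>g. L2V_mem \<sigma> \<rho> V g \<longrightarrow> (\<exists>x. L2V_eq \<sigma> \<rho> V (U x) g))"

definition intertwines ::
  "real measure \<Rightarrow> real measure \<Rightarrow> (real \<Rightarrow> cmat2) \<Rightarrow> ('a::complex_hilbert \<Rightarrow> l2v)
     \<Rightarrow> ('a \<Rightarrow> 'a) \<Rightarrow> 'a set \<Rightarrow> bool" where
  "intertwines \<sigma> \<rho> V U T D \<longleftrightarrow>
     D = {x. L2V_mem \<sigma> \<rho> V (L2V_mult (U x))} \<and>
     (\<forall>x\<in>D. L2V_eq \<sigma> \<rho> V (U (T x)) (L2V_mult (U x)))"

definition Amat :: "(nat \<Rightarrow> real) \<Rightarrow> (nat \<Rightarrow> complex) \<Rightarrow> nat \<Rightarrow> cmat2" where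
  "Amat a b n = mk2 (of_real (a (2*n))) 0 (b (2*n+1)) (of_real (a (2*n+1)))"

definition Bmat :: "(nat \<Rightarrow> complex) \<Rightarrow> (nat \<Rightarrow> real) \<Rightarrow> nat \<Rightarrow> cmat2" where
  "Bmat b c n = mk2 (of_real (c (2*n))) (b (2*n)) (cnj (b (2*n))) (of_real (c (2*n+1)))"

definition matrix_orth_polys ::
  "(nat \<Rightarrow> real) \<Rightarrow> (nat \<Rightarrow> complex) \<Rightarrow> (nat \<Rightarrow> real) \<Rightarrow> (nat \<Rightarrow> real \<Rightarrow> cmat2) \<Rightarrow> bool" where
  "matrix_orth_polys a b c P \<longleftrightarrow>
     (\<forall>x. P 0 x = mat 1) \<and>
     (\<forall>n x. x *\<^sub>R P n x =
        Amat a b n ** P (Suc n) x + Bmat b c n ** P n x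
        + (if n = 0 then 0 else adj2 (Amat a b (n - 1)) ** P (n - 1) x))"

end

theory Submission
  imports Defs
begin

lemma mk2_nth[simp]:
  "mk2 p q r s $ 1 $ 1 = p" "mk2 p q r s $ 1 $ 2 = q" "mk2 p q r s $ 2 $ 1 = r" "mk2 p q r s $ 2 $ 2 = s"
  by (simp_all add: mk2_def)

lemma mat_eq2: "(A::cmat2) = B \<longleftrightarrow> A$1$1 = B$1$1 \<and> A$1$2 = B$1$2 \<and> A$2$1 = B$2$1 \<and> A$2$2 = B$2$2"
  by (auto simp: vec_eq_iff forall_2)

lemma vec_eq2: "(v::cvec2) = w \<longleftrightarrow> v$1 = w$1 \<and> v$2 = w$2"
  by (auto simp: vec_eq_iff forall_2)

lemma mk2_eta: "(A::cmat2) = mk2 (A$1$1) (A$1$2) (A$2$1) (A$2$2)"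
  by (simp add: mat_eq2)

lemma mult_nth2[simp]: "((A::cmat2) ** B) $ i $ j = A$i$1 * B$1$j + A$i$2 * B$2$j"
  by (simp add: matrix_matrix_mult_def sum_2)

lemma mulv_nth2[simp]: "((A::cmat2) *v v) $ i = A$i$1 * v$1 + A$i$2 * v$2"
  by (simp add: matrix_vector_mult_def sum_2)

lemma adj2_nth[simp]: "adj2 A $ i $ j = cnj (A $ j $ i)"
  by (simp add: adj2_def)

lemma mat1_nth[simp]: "(mat 1 :: cmat2) $ 1 $ 1 = 1" "(mat 1 :: cmat2) $ 1 $ 2 = 0"
   "(mat 1 :: cmat2) $ 2 $ 1 = 0" "(mat 1 :: cmat2) $ 2 $ 2 = 1"
  by (simp_all add: mat_def)

lemma hform_expand: "hform v A w = cnj (v$1) * (A$1$1 * w$1 + A$1$2 * w$2) + cnj (v$2) * (A$2$1 * w$1 + A$2$2 * w$2)"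
  by (simp add: hform_def sum_2)

lemma hform_add_right: "hform v A (w1 + w2) = hform v A w1 + hform v A w2"
  by (simp add: hform_expand algebra_simps)
lemma hform_add_left: "hform (v1 + v2) A w = hform v1 A w + hform v2 A w"
  by (simp add: hform_expand algebra_simps)
lemma hform_diff_right: "hform v A (w1 - w2) = hform v A w1 - hform v A w2"
  by (simp add: hform_expand algebra_simps)
lemma hform_diff_left: "hform (v1 - v2) A w = hform v1 A w - hform v2 A w"
  by (simp add: hform_expand algebra_simps)
lemma hform_scale_right: "hform v A (c *s w) = c * hform v A w"
  by (simp add: hform_expand algebra_simps)
lemma hform_scale_left: "hform (c *s v) A w = cnj c * hform v A w"
  by (simp add: hform_expand algebra_simps)
lemma hform_zero_right[simp]: "hform v A 0 = 0"
  by (simp add: hform_expand)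

lemma psd2_herm:
  assumes "psd2 A" shows "hform w A v = cnj (hform v A w)"
proof -
  have h: "\<And>v. Im (hform v A v) = 0" using assms by (simp add: psd2_def)
  have e1: "Im (A$1$1) = 0" using h[of "vector [1,0]"] by (simp add: hform_expand)
  have e2: "Im (A$2$2) = 0" using h[of "vector [0,1]"] by (simp add: hform_expand)
  have e3: "Im (A$1$1 + A$1$2 + A$2$1 + A$2$2) = 0" using h[of "vector [1,1]"] by (simp add: hform_expand)
  have e4: "Im (A$1$1 + \<i> * A$1$2 - \<i> * A$2$1 + A$2$2) = 0" using h[of "vector [1,\<i>]"]
    by (simp add: hform_expand algebra_simps)
  have "A$2$1 = cnj (A$1$2)" using e1 e2 e3 e4 by (simp add: complex_eq_iff)
  moreover have "A$1$1 = cnj (A$1$1)" "A$2$2 = cnj (A$2$2)" using e1 e2 by (simp_all add: complex_eq_iff)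
  ultimately show ?thesis by (simp add: hform_expand algebra_simps)
qed


lemma quad_zero:
  fixes b c :: real
  assumes "\<And>t. 0 \<le> b * t + c * t^2" shows "b = 0"
proof -
  have c: "0 \<le> c" using assms[of 1] assms[of "-1"] by simp
  define t where "t = - b / (c+1)"
  have d: "c + 1 \<noteq> 0" using c by simp
  have e: "(c+1) * t = - b" using d unfolding t_def by simp
  have "(c+1)^2 * (b * t + c * t^2) = b * (c+1) * ((c+1) * t) + c * ((c+1)*t)^2"
    by (simp add: power2_eq_square algebra_simps)
  also have "\<dots> = - (b^2)" unfolding e by (simp add: power2_eq_square algebra_simps)
  finally have "- (b^2) \<ge> 0" using assms[of t] by (metis zero_le_mult_iff zero_le_power2)
  then show ?thesis by simp
qed

lemma q_expand: "hform (v + t *s w) A (v + t *s w) =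
   hform v A v + t * hform v A w + cnj t * hform w A v + (t * cnj t) * hform w A w"
  by (simp add: hform_add_left hform_add_right hform_scale_left hform_scale_right algebra_simps)

lemma psd2_Im: "psd2 A \<Longrightarrow> Im (hform v A v) = 0" by (simp add: psd2_def)
lemma psd2_Re: "psd2 A \<Longrightarrow> 0 \<le> Re (hform v A v)" by (simp add: psd2_def)

lemma psd2_zero:
  assumes A: "psd2 A" and z: "hform v A v = 0" shows "hform w A v = 0"
proof -
  have key: "Re (hform v A u) = 0" for u
  proof -
    have "0 \<le> (2 * Re (hform v A u)) * t + Re (hform u A u) * t^2" for t :: real
    proof -
      have "0 \<le> Re (hform (v + complex_of_real t *s u) A (v + complex_of_real t *s u))"
        using psd2_Re[OF A] .
      also have "\<dots> = (2 * Re (hform v A u)) * t + Re (hform u A u) * t^2"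
        unfolding q_expand psd2_herm[OF A, of u v] using z
        by (simp add: power2_eq_square algebra_simps)
      finally show ?thesis .
    qed
    then show ?thesis using quad_zero[of "2 * Re (hform v A u)" "Re (hform u A u)"] by simp
  qed
  have "Re (hform v A w) = 0" by (rule key)
  moreover have "Re (hform v A (\<i> *s w)) = 0" by (rule key)
  ultimately have "hform v A w = 0"
    by (simp add: hform_scale_right complex_eq_iff)
  then show ?thesis using psd2_herm[OF A, of w v] by simp
qed

lemma q_par: "hform (v + w) A (v + w) + hform (v - w) A (v - w) = 2 * hform v A v + 2 * hform w A w"
  by (simp add: hform_add_left hform_add_right hform_diff_left hform_diff_right algebra_simps)

lemma q_bound_add: assumes "psd2 A"
  shows "Re (hform (v + w) A (v + w)) \<le> 2 * Re (hform v A v) + 2 * Re (hform w A w)"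
proof -
  have "Re (hform (v + w) A (v + w) + hform (v - w) A (v - w)) = 2 * Re (hform v A v) + 2 * Re (hform w A w)"
    by (simp only: q_par) simp
  then show ?thesis using psd2_Re[OF assms, of "v - w"] by simp
qed

lemma q_bound_diff: assumes "psd2 A"
  shows "Re (hform (v - w) A (v - w)) \<le> 2 * Re (hform v A v) + 2 * Re (hform w A w)"
proof -
  have "Re (hform (v + w) A (v + w) + hform (v - w) A (v - w)) = 2 * Re (hform v A v) + 2 * Re (hform w A w)"
    by (simp only: q_par) simp
  then show ?thesis using psd2_Re[OF assms, of "v + w"] by simp
qed

lemma q_scale: "hform (c *s v) A (c *s v) = (c * cnj c) * hform v A v"
  by (simp add: hform_scale_left hform_scale_right algebra_simps)

lemma polar: "4 * hform w A v = hform (v + w) A (v + w) - hform (v - w) A (v - w)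
   + \<i> * hform (v + \<i> *s w) A (v + \<i> *s w) - \<i> * hform (v - \<i> *s w) A (v - \<i> *s w)"
  by (simp add: hform_add_left hform_add_right hform_diff_left hform_diff_right
      hform_scale_left hform_scale_right algebra_simps)

lemma tri4: "cmod (a - b + \<i> * c - \<i> * d) \<le> cmod a + cmod b + cmod c + cmod d"
proof -
  have "cmod (a - b + \<i> * c - \<i> * d) \<le> cmod (a - b + \<i> * c) + cmod (\<i> * d)" by (rule norm_triangle_ineq4)
  also have "cmod (a - b + \<i> * c) \<le> cmod (a - b) + cmod (\<i> * c)" by (rule norm_triangle_ineq)
  also have "cmod (a - b) \<le> cmod a + cmod b" by (rule norm_triangle_ineq4)
  finally show ?thesis by (simp add: norm_mult)
qed

lemma cross_bound: assumes A: "psd2 A"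
  shows "cmod (hform w A v) \<le> 2 * Re (hform v A v) + 2 * Re (hform w A w)"
proof -
  have n: "cmod (hform x A x) = Re (hform x A x)" for x
    using psd2_Im[OF A, of x] psd2_Re[OF A, of x] by (simp add: cmod_eq_Re)
  have qi: "hform (\<i> *s w) A (\<i> *s w) = hform w A w" by (simp add: q_scale)
  have "4 * cmod (hform w A v) = cmod (4 * hform w A v)" by (simp add: norm_mult)
  also have "\<dots> \<le> cmod (hform (v + w) A (v + w)) + cmod (hform (v - w) A (v - w))
     + cmod (hform (v + \<i> *s w) A (v + \<i> *s w)) + cmod (hform (v - \<i> *s w) A (v - \<i> *s w))"
    unfolding polar by (rule tri4)
  also have "\<dots> \<le> 4 * (2 * Re (hform v A v) + 2 * Re (hform w A w))"
    unfolding n using q_bound_add[OF A, of v w] q_bound_diff[OF A, of v w]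
      q_bound_add[OF A, of v "\<i> *s w"] q_bound_diff[OF A, of v "\<i> *s w"] qi by simp
  finally show ?thesis by simp
qed


lemma scaleR_nth2[simp]: "((x::real) *\<^sub>R (M::cmat2)) $ i $ j = complex_of_real x * M$i$j"
  by (simp only: vector_scaleR_component) (simp add: scaleR_conv_of_real)

lemma scaleR_mulv2: "((x::real) *\<^sub>R (M::cmat2)) *v v = complex_of_real x *s (M *v v)"
  by (simp add: vec_eq2 algebra_simps del: vector_scaleR_component)

lemma mulv_scale2: "(M::cmat2) *v (c *s v) = c *s (M *v v)"
  by (simp add: vec_eq2 algebra_simps)

lemma Amat_inj:
  assumes apos: "\<And>n. a n > 0" and e: "Amat a b n *v u = Amat a b n *v u'"
  shows "u = u'"
proof -
  have e1: "of_real (a (2*n)) * u$1 = of_real (a (2*n)) * u'$1"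
    using arg_cong[OF e, of "\<lambda>v. v$1"] by (simp add: Amat_def)
  have a1: "complex_of_real (a (2*n)) \<noteq> 0" using apos[of "2*n"] by simp
  have u1: "u$1 = u'$1" using e1 a1 by simp
  have e2: "b (2*n+1) * u$1 + of_real (a (2*n+1)) * u$2 = b (2*n+1) * u'$1 + of_real (a (2*n+1)) * u'$2"
    using arg_cong[OF e, of "\<lambda>v. v$2"] by (simp add: Amat_def)
  have a2: "complex_of_real (a (2*n+1)) \<noteq> 0" using apos[of "2*n+1"] by simp
  have u2: "u$2 = u'$2" using e2 u1 a2 by simp
  show ?thesis using u1 u2 by (simp add: vec_eq2)
qed

lemma alg:
  assumes P: "matrix_orth_polys a b c P" and apos: "\<And>n. a n > 0"
    and rec: "\<And>k. complex_of_real x * s k = of_real (a k) * s (k+2) + b k * s (k+1) + of_real (c k) * s k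
        + (if k \<ge> 1 then cnj (b (k-1)) * s (k-1) else 0) + (if k \<ge> 2 then of_real (a (k-2)) * s (k-2) else 0)"
  shows "s (2*n) = P n x $1$1 * s 0 + P n x $1$2 * s 1 \<and> s (2*n+1) = P n x $2$1 * s 0 + P n x $2$2 * s 1"
proof -
  define S :: "nat \<Rightarrow> cvec2" where "S n = vector [s (2*n), s (2*n+1)]" for n
  define Q where "Q n = P n x" for n
  define A where "A n = Amat a b n" for n
  define B where "B n = Bmat b c n" for n
  have S1[simp]: "S n $ 1 = s (2*n)" "S n $ 2 = s (2*n+1)" for n by (simp_all add: S_def)
  have Q0: "Q 0 = mat 1" using P by (simp add: matrix_orth_polys_def Q_def)
  have recP: "x *\<^sub>R Q n = A n ** Q (Suc n) + B n ** Q n + (if n = 0 then 0 else adj2 (A (n-1)) ** Q (n-1))" for n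
    using P by (simp add: matrix_orth_polys_def Q_def A_def B_def)
  have recS: "complex_of_real x *s S n = A n *v S (Suc n) + B n *v S n + (if n = 0 then 0 else adj2 (A (n-1)) *v S (n-1))" for n
  proof (cases n)
    case 0
    show ?thesis using rec[of 0] rec[of 1] unfolding 0
      by (simp add: vec_eq2 A_def B_def Amat_def Bmat_def algebra_simps)
  next
    case (Suc m)
    have k1: "2 * Suc m = Suc (Suc (2*m))" by simp
    show ?thesis using rec[of "2*m+2"] rec[of "2*m+3"] unfolding Suc
      by (simp add: vec_eq2 A_def B_def Amat_def Bmat_def algebra_simps k1 mult_2 numeral_3_eq_3 numeral_2_eq_2)
  qed
  have step: "S (Suc n) = Q (Suc n) *v S 0"
    if h0: "S n = Q n *v S 0" and h1: "n \<ge> 1 \<Longrightarrow> S (n-1) = Q (n-1) *v S 0" for n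
  proof (rule Amat_inj[OF apos])
    have "A n *v S (Suc n) = complex_of_real x *s S n - B n *v S n - (if n = 0 then 0 else adj2 (A (n-1)) *v S (n-1))"
      using recS[of n] by (simp add: algebra_simps)
    also have "\<dots> = (x *\<^sub>R Q n - B n ** Q n - (if n = 0 then 0 else adj2 (A (n-1)) ** Q (n-1))) *v S 0"
      using h0 h1 by (simp add: matrix_vector_mult_diff_rdistrib scaleR_mulv2 matrix_vector_mul_assoc)
    also have "\<dots> = (A n ** Q (Suc n)) *v S 0" by (subst recP) simp
    also have "\<dots> = A n *v (Q (Suc n) *v S 0)" by (simp add: matrix_vector_mul_assoc)
    finally show "Amat a b n *v S (Suc n) = Amat a b n *v (Q (Suc n) *v S 0)" by (simp add: A_def)
  qed
  have main: "S n = Q n *v S 0 \<and> S (Suc n) = Q (Suc n) *v S 0" for n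
  proof (induction n)
    case 0
    have "S 0 = Q 0 *v S 0" by (simp add: Q0)
    then show ?case using step[of 0] by simp
  next
    case (Suc n)
    then show ?case using step[of "Suc n"] by simp
  qed
  show ?thesis using main[of n] by (simp add: vec_eq2 Q_def)
qed


lemma meas_vnth[measurable (raw)]:
  "f \<in> borel_measurable M \<Longrightarrow> (\<lambda>x. f x $ i) \<in> borel_measurable M"
  by (rule borel_measurable_continuous_on[where f="\<lambda>v. v $ i"]) (intro continuous_on_component continuous_on_id)

lemma meas_cnj[measurable (raw)]:
  "f \<in> borel_measurable M \<Longrightarrow> (\<lambda>x. cnj (f x :: complex)) \<in> borel_measurable M"
  by (rule borel_measurable_continuous_on[where f=cnj]) (intro continuous_on_cnj continuous_on_id)

lemma meas_scs:
  "f \<in> borel_measurable M \<Longrightarrow> (\<lambda>x. (c::complex) *s (f x :: cvec2)) \<in> borel_measurable M"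
proof (rule borel_measurable_continuous_on[where f="\<lambda>v. c *s v"])
  have e: "(\<lambda>v. c *s v) = (\<lambda>v::cvec2. \<chi> i. c * v $ i)" by (auto simp: vec_eq_iff)
  show "continuous_on UNIV (\<lambda>v::cvec2. c *s v)" unfolding e
    by (intro continuous_on_vec_lambda continuous_on_mult continuous_on_const continuous_on_component continuous_on_id)
qed

lemma meas_hform:
  assumes [measurable]: "v \<in> borel_measurable M" "A \<in> borel_measurable M" "w \<in> borel_measurable M"
  shows "(\<lambda>x. hform (v x) (A x) (w x)) \<in> borel_measurable M"
  unfolding hform_expand by measurable

declare meas_hform[measurable (raw)]

lemma psd2_real: "psd2 A \<Longrightarrow> hform v A v = complex_of_real (Re (hform v A v))"
  using psd2_Im[of A v] by (simp add: complex_eq_iff)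

lemma sq_add_bound: "(cmod (x + y))\<^sup>2 \<le> 2 * (cmod x)\<^sup>2 + 2 * (cmod y)\<^sup>2"
proof -
  have "cmod (x + y) \<le> cmod x + cmod y" by (rule norm_triangle_ineq)
  then have "(cmod (x + y))\<^sup>2 \<le> (cmod x + cmod y)\<^sup>2" by (simp add: power_mono)
  also have "\<dots> \<le> 2 * (cmod x)\<^sup>2 + 2 * (cmod y)\<^sup>2"
  proof -
    have "0 \<le> (cmod x - cmod y)\<^sup>2" by simp
    then show ?thesis by (simp add: power2_eq_square algebra_simps)
  qed
  finally show ?thesis .
qed

lemma sq_diff_bound: "(cmod (x - y))\<^sup>2 \<le> 2 * (cmod x)\<^sup>2 + 2 * (cmod y)\<^sup>2"
  using sq_add_bound[of x "-y"] by simp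

locale L2ctx =
  fixes \<sigma> \<rho> :: "real measure" and V :: "real \<Rightarrow> cmat2"
  assumes V_meas[measurable]: "V \<in> borel_measurable \<rho>" and V_psd: "AE x in \<rho>. psd2 (V x)"
begin

abbreviation "mem \<equiv> L2V_mem \<sigma> \<rho> V"

lemma mem_D:
  assumes "mem g"
  shows "fst g \<in> borel_measurable \<sigma>" "integrable \<sigma> (\<lambda>x. (cmod (fst g x))\<^sup>2)"
     "snd g \<in> borel_measurable \<rho>" "integrable \<rho> (\<lambda>x. hform (snd g x) (V x) (snd g x))"
  using assms by (auto simp: L2V_mem_def)

lemma mem_add_diff:
  assumes g: "mem g" and h: "mem h"
  shows "mem (L2V_add g h)" "mem (L2V_diff g h)"
proof -
  note gm = mem_D[OF g] and hm = mem_D[OF h]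
  have [measurable]: "fst g \<in> borel_measurable \<sigma>" "fst h \<in> borel_measurable \<sigma>"
     "snd g \<in> borel_measurable \<rho>" "snd h \<in> borel_measurable \<rho>" using gm hm by auto
  have I: "integrable \<sigma> (\<lambda>x. 2 * (cmod (fst g x))\<^sup>2 + 2 * (cmod (fst h x))\<^sup>2)"
    using gm hm by auto
  have J: "integrable \<rho> (\<lambda>x. 2 * hform (snd g x) (V x) (snd g x) + 2 * hform (snd h x) (V x) (snd h x))"
    using gm hm by auto
  have nJ: "AE x in \<rho>. norm (hform (u x) (V x) (u x)) \<le>
      norm (2 * hform (snd g x) (V x) (snd g x) + 2 * hform (snd h x) (V x) (snd h x))"
    if u: "\<And>x. u x = snd g x + snd h x \<or> u x = snd g x - snd h x" for u
    using V_psd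
  proof eventually_elim
    case (elim x)
    let ?A = "V x" and ?v = "snd g x" and ?w = "snd h x"
    have "norm (hform (u x) ?A (u x)) = Re (hform (u x) ?A (u x))"
      by (subst psd2_real[OF elim]) (simp add: psd2_Re[OF elim])
    also have "\<dots> \<le> 2 * Re (hform ?v ?A ?v) + 2 * Re (hform ?w ?A ?w)"
      using u[of x] q_bound_add[OF elim, of ?v ?w] q_bound_diff[OF elim, of ?v ?w] by auto
    also have "\<dots> = norm (2 * hform ?v ?A ?v + 2 * hform ?w ?A ?w)"
    proof -
      define rv where "rv = Re (hform ?v ?A ?v)"
      define rw where "rw = Re (hform ?w ?A ?w)"
      have r1: "hform ?v ?A ?v = of_real rv" unfolding rv_def by (rule psd2_real[OF elim])
      have r2: "hform ?w ?A ?w = of_real rw" unfolding rw_def by (rule psd2_real[OF elim])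
      have p: "rv \<ge> 0" "rw \<ge> 0" unfolding rv_def rw_def using psd2_Re[OF elim] by auto
      have "norm (2 * hform ?v ?A ?v + 2 * hform ?w ?A ?w) = norm (complex_of_real (2 * rv + 2 * rw))"
        unfolding r1 r2 by simp
      also have "\<dots> = 2 * rv + 2 * rw" using p by (simp only: norm_of_real)
      finally show ?thesis unfolding rv_def rw_def by simp
    qed
    finally show ?case .
  qed
  show "mem (L2V_add g h)"
    unfolding L2V_mem_def L2V_add_def fst_conv snd_conv
  proof (intro conjI)
    show "integrable \<sigma> (\<lambda>x. (cmod (fst g x + fst h x))\<^sup>2)"
      by (rule Bochner_Integration.integrable_bound[OF I], measurable, rule AE_I2) (simp add: sq_add_bound)
    show "integrable \<rho> (\<lambda>x. hform (snd g x + snd h x) (V x) (snd g x + snd h x))"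
      by (rule Bochner_Integration.integrable_bound[OF J], measurable, rule nJ) simp
  qed measurable
  show "mem (L2V_diff g h)"
    unfolding L2V_mem_def L2V_diff_def fst_conv snd_conv
  proof (intro conjI)
    show "integrable \<sigma> (\<lambda>x. (cmod (fst g x - fst h x))\<^sup>2)"
      by (rule Bochner_Integration.integrable_bound[OF I], measurable, rule AE_I2) (simp add: sq_diff_bound)
    show "integrable \<rho> (\<lambda>x. hform (snd g x - snd h x) (V x) (snd g x - snd h x))"
      by (rule Bochner_Integration.integrable_bound[OF J], measurable, rule nJ) simp
  qed measurable
qed

lemma mem_scale:
  assumes g: "mem g" shows "mem (L2V_scale c g)"
proof -
  note gm = mem_D[OF g]
  have [measurable]: "fst g \<in> borel_measurable \<sigma>" "snd g \<in> borel_measurable \<rho>" using gm by auto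
  have e1: "(\<lambda>x. (cmod (c * fst g x))\<^sup>2) = (\<lambda>x. (cmod c)\<^sup>2 * (cmod (fst g x))\<^sup>2)"
    by (simp add: norm_mult power_mult_distrib)
  have e2: "(\<lambda>x. hform (c *s snd g x) (V x) (c *s snd g x)) = (\<lambda>x. (c * cnj c) * hform (snd g x) (V x) (snd g x))"
    by (simp only: q_scale)
  have i1: "integrable \<sigma> (\<lambda>x. (cmod (c * fst g x))\<^sup>2)"
    unfolding e1 by (rule integrable_mult_right) (rule gm(2))
  have i2: "integrable \<rho> (\<lambda>x. hform (c *s snd g x) (V x) (c *s snd g x))"
    unfolding e2 by (rule integrable_mult_right) (rule gm(4))
  have m1: "(\<lambda>x. c * fst g x) \<in> borel_measurable \<sigma>" by measurable
  have m2: "(\<lambda>x. c *s snd g x) \<in> borel_measurable \<rho>" by (rule meas_scs) (rule gm(3))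
  show ?thesis unfolding L2V_mem_def L2V_scale_def fst_conv snd_conv
    using i1 i2 m1 m2 by blast
qed

end


context L2ctx begin

lemma K:
  assumes g: "mem g" and h: "mem h" and e: "L2V_eq \<sigma> \<rho> V g h"
  shows "(AE x in \<sigma>. fst g x = fst h x) \<and> (AE x in \<rho>. \<forall>w. hform w (V x) (snd g x) = hform w (V x) (snd h x))"
proof -
  define d where "d = L2V_diff g h"
  have d: "mem d" unfolding d_def by (rule mem_add_diff[OF g h])
  note dm = mem_D[OF d]
  have [measurable]: "fst d \<in> borel_measurable \<sigma>" "snd d \<in> borel_measurable \<rho>" using dm by auto
  let ?X = "\<integral>x. (cmod (fst d x))\<^sup>2 \<partial>\<sigma>"
  let ?Y = "\<integral>x. Re (hform (snd d x) (V x) (snd d x)) \<partial>\<rho>"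
  have X: "(\<integral>x. fst d x * cnj (fst d x) \<partial>\<sigma>) = of_real ?X"
  proof -
    have "\<And>x. fst d x * cnj (fst d x) = complex_of_real ((cmod (fst d x))\<^sup>2)" by (simp only: complex_norm_square)
    then show ?thesis by (simp only: integral_complex_of_real)
  qed
  have Y: "(\<integral>x. hform (snd d x) (V x) (snd d x) \<partial>\<rho>) = of_real ?Y"
  proof -
    have "(\<integral>x. hform (snd d x) (V x) (snd d x) \<partial>\<rho>) = (\<integral>x. complex_of_real (Re (hform (snd d x) (V x) (snd d x))) \<partial>\<rho>)"
      by (rule integral_cong_AE) (measurable, use V_psd in eventually_elim, rule psd2_real)
    then show ?thesis by simp
  qed
  have "of_real ?X + of_real ?Y = (0::complex)"
    using e unfolding L2V_eq_def L2V_inner_def d_def[symmetric] X Y .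
  then have s: "?X + ?Y = 0" by (simp only: of_real_add[symmetric] of_real_eq_0_iff)
  have X0: "?X \<ge> 0" by simp
  have Y0: "?Y \<ge> 0" by (rule integral_nonneg_AE) (use V_psd in eventually_elim, rule psd2_Re)
  have "?X = 0" using s X0 Y0 by linarith
  then have ae1: "AE x in \<sigma>. (cmod (fst d x))\<^sup>2 = 0"
    using integral_nonneg_eq_0_iff_AE[of \<sigma> "\<lambda>x. (cmod (fst d x))\<^sup>2"] dm by simp
  have "?Y = 0" using s X0 Y0 by linarith
  then have ae2: "AE x in \<rho>. Re (hform (snd d x) (V x) (snd d x)) = 0"
    using integral_nonneg_eq_0_iff_AE[of \<rho> "\<lambda>x. Re (hform (snd d x) (V x) (snd d x))"] dm
    by (simp add: AE_mp[OF V_psd AE_I2] psd2_Re)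
  show ?thesis
  proof
    show "AE x in \<sigma>. fst g x = fst h x" using ae1 by eventually_elim (simp add: d_def L2V_diff_def)
    show "AE x in \<rho>. \<forall>w. hform w (V x) (snd g x) = hform w (V x) (snd h x)"
      using ae2 V_psd
    proof eventually_elim
      case (elim x)
      have "hform (snd d x) (V x) (snd d x) = 0" using elim(1) psd2_Im[OF elim(2)] by (simp add: complex_eq_iff)
      then have "hform w (V x) (snd d x) = 0" for w by (rule psd2_zero[OF elim(2)])
      then show ?case by (simp add: d_def L2V_diff_def hform_diff_right)
    qed
  qed
qed

end


definition emat :: "2 \<Rightarrow> 2 \<Rightarrow> complex \<Rightarrow> cmat2" where
  "emat i j z = (\<chi> i' j'. if i' = i \<and> j' = j then z else 0)"

lemma bl_emat: "bounded_linear (emat i j)"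
proof -
  have "linear (emat i j)"
    by (rule linearI) (simp_all add: emat_def vec_eq_iff)
  then show ?thesis by (simp add: linear_conv_bounded_linear)
qed

lemma mk2_emat: "mk2 p q r s = emat 1 1 p + emat 1 2 q + emat 2 1 r + emat 2 2 s"
  by (simp add: mat_eq2 emat_def)

lemma integrable_mk2:
  assumes "integrable M e11" "integrable M e12" "integrable M e21" "integrable M e22"
  shows "integrable M (\<lambda>x. mk2 (e11 x) (e12 x) (e21 x) (e22 x))"
    "(\<integral>x. mk2 (e11 x) (e12 x) (e21 x) (e22 x) \<partial>M) = mk2 (integral\<^sup>L M e11) (integral\<^sup>L M e12) (integral\<^sup>L M e21) (integral\<^sup>L M e22)"
proof -
  note i = integrable_bounded_linear[OF bl_emat]
  note j = integral_bounded_linear[OF bl_emat]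
  show "integrable M (\<lambda>x. mk2 (e11 x) (e12 x) (e21 x) (e22 x))"
    unfolding mk2_emat by (intro Bochner_Integration.integrable_add i assms)
  show "(\<integral>x. mk2 (e11 x) (e12 x) (e21 x) (e22 x) \<partial>M) = mk2 (integral\<^sup>L M e11) (integral\<^sup>L M e12) (integral\<^sup>L M e21) (integral\<^sup>L M e22)"
    unfolding mk2_emat using assms
    by (simp add: integral_add i j)
qed

lemma Ainv: "a (2*n) > 0 \<Longrightarrow> a (2*n+1) > 0 \<Longrightarrow>
  mk2 (1 / of_real (a (2*n))) 0 (- b (2*n+1) / (of_real (a (2*n)) * of_real (a (2*n+1)))) (1 / of_real (a (2*n+1))) ** Amat a b n = mat 1"
  by (simp add: mat_eq2 Amat_def field_simps)

definition emeas :: "(real \<Rightarrow> cmat2) \<Rightarrow> bool" where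
  "emeas F \<longleftrightarrow> (\<forall>i j. (\<lambda>x. F x $ i $ j) \<in> borel_measurable borel)"

lemma P_meas:
  assumes P: "matrix_orth_polys a b c P" and apos: "\<And>n. a n > 0"
  shows "(\<lambda>x. P k x $ i $ j) \<in> borel_measurable borel"
proof -
  have recP: "x *\<^sub>R P n x = Amat a b n ** P (Suc n) x + Bmat b c n ** P n x + (if n = 0 then 0 else adj2 (Amat a b (n-1)) ** P (n-1) x)" for n x
    using P by (simp add: matrix_orth_polys_def)
  define Ai where "Ai n = mk2 (1 / of_real (a (2*n))) 0 (- b (2*n+1) / (of_real (a (2*n)) * of_real (a (2*n+1)))) (1 / of_real (a (2*n+1)))" for n
  have Ai: "Ai n ** Amat a b n = mat 1" for n unfolding Ai_def by (rule Ainv) (rule apos)+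
  have PS: "P (Suc n) x = Ai n ** (x *\<^sub>R P n x - Bmat b c n ** P n x - (if n = 0 then 0 else adj2 (Amat a b (n-1)) ** P (n-1) x))" for n x
  proof -
    have "P (Suc n) x = Ai n ** (Amat a b n ** P (Suc n) x)" by (simp add: matrix_mul_assoc Ai)
    also have "Amat a b n ** P (Suc n) x = x *\<^sub>R P n x - Bmat b c n ** P n x - (if n = 0 then 0 else adj2 (Amat a b (n-1)) ** P (n-1) x)"
      using recP[of x n] by (simp add: algebra_simps)
    finally show ?thesis .
  qed
  have main: "emeas (P n) \<and> emeas (P (Suc n))" for n
  proof (induction n)
    case 0
    have h0[measurable]: "(\<lambda>x. P 0 x $ i $ j) \<in> borel_measurable borel" for i j
      using P by (simp add: matrix_orth_polys_def)
    have "(\<lambda>x. P (Suc 0) x $ i $ j) \<in> borel_measurable borel" for i j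
    proof -
      have PS0: "P (Suc 0) x = Ai 0 ** (x *\<^sub>R P 0 x - Bmat b c 0 ** P 0 x)" for x
        by (subst PS) simp
      show ?thesis unfolding PS0 by (simp only: mult_nth2 vector_minus_component vector_scaleR_component) measurable
    qed
    then show ?case using h0 by (simp add: emeas_def)
  next
    case (Suc n)
    then have h[measurable]: "\<And>i j. (\<lambda>x. P n x $ i $ j) \<in> borel_measurable borel" "\<And>i j. (\<lambda>x. P (Suc n) x $ i $ j) \<in> borel_measurable borel"
      by (auto simp: emeas_def)
    have "(\<lambda>x. P (Suc (Suc n)) x $ i $ j) \<in> borel_measurable borel" for i j
    proof -
      have PS1: "P (Suc (Suc n)) x = Ai (Suc n) ** (x *\<^sub>R P (Suc n) x - Bmat b c (Suc n) ** P (Suc n) x - adj2 (Amat a b n) ** P n x)" for x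
        by (subst PS) simp
      show ?thesis unfolding PS1 by (simp only: mult_nth2 vector_minus_component vector_scaleR_component adj2_nth) measurable
    qed
    then show ?case using Suc by (simp add: emeas_def)
  qed
  then show ?thesis by (simp add: emeas_def)
qed


lemma entry_sigma:
  fixes Pn Pm :: cmat2
  assumes "gk = Pn$i$1 * g0 + Pn$i$2 * g1" "gl = Pm$j$1 * g0 + Pm$j$2 * g1"
  shows "(Pn ** mk2 ((cmod g0)\<^sup>2) (g0 * cnj g1) (cnj g0 * g1) ((cmod g1)\<^sup>2) ** adj2 Pm) $ i $ j = gk * cnj gl"
proof -
  have "mk2 ((cmod g0)\<^sup>2) (g0 * cnj g1) (cnj g0 * g1) ((cmod g1)\<^sup>2) = mk2 (g0 * cnj g0) (g0 * cnj g1) (cnj g0 * g1) (g1 * cnj g1)"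
    by (simp only: complex_norm_square[symmetric] of_real_power)
  then show ?thesis unfolding assms by (simp add: algebra_simps)
qed

lemma entry_rho:
  fixes Pn Pm :: cmat2
  assumes A: "psd2 A"
    and hk: "\<And>w. hform w A vk = Pn$i$1 * hform w A v0 + Pn$i$2 * hform w A v1"
    and hl: "\<And>w. hform w A vl = Pm$j$1 * hform w A v0 + Pm$j$2 * hform w A v1"
  shows "(Pn ** mk2 (hform v0 A v0) (hform v1 A v0) (hform v0 A v1) (hform v1 A v1) ** adj2 Pm) $ i $ j = hform vl A vk"
proof -
  have c0: "cnj (hform v0 A v0) = hform v0 A v0" using psd2_herm[OF A, of v0 v0] by simp
  have c1: "cnj (hform v1 A v1) = hform v1 A v1" using psd2_herm[OF A, of v1 v1] by simp
  have c01: "cnj (hform v0 A v1) = hform v1 A v0" using psd2_herm[OF A, of v1 v0] by simp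
  have c10: "cnj (hform v1 A v0) = hform v0 A v1" using psd2_herm[OF A, of v0 v1] by simp
  have l0: "hform vl A v0 = cnj (Pm$j$1) * hform v0 A v0 + cnj (Pm$j$2) * hform v1 A v0"
    using psd2_herm[OF A, of vl v0] hl[of v0] c0 c01 by simp
  have l1: "hform vl A v1 = cnj (Pm$j$1) * hform v0 A v1 + cnj (Pm$j$2) * hform v1 A v1"
    using psd2_herm[OF A, of vl v1] hl[of v1] c1 c10 by simp
  have "hform vl A vk = Pn$i$1 * hform vl A v0 + Pn$i$2 * hform vl A v1" by (rule hk)
  then show ?thesis unfolding l0 l1 by (simp add: algebra_simps)
qed


lemma scaleC_zero_left[simp]: "(0::complex) *\<^sub>C x = (0::'a::complex_hilbert)"
proof -
  have "(0::complex) *\<^sub>C x = 0 *\<^sub>C x + 0 *\<^sub>C x"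
    using scaleC_add_left[of 0 0 x] by (simp only: add_0_left)
  then show ?thesis by (simp only: add_cancel_right_right)
qed

lemma gen:
  fixes T :: "'h::complex_hilbert \<Rightarrow> 'h" and f :: "nat \<Rightarrow> 'h" and \<Phi> :: "'h \<Rightarrow> real \<Rightarrow> 'w \<Rightarrow> complex"
  assumes add: "\<And>x y. AE t in M. \<forall>w. \<Phi> (x+y) t w = \<Phi> x t w + \<Phi> y t w"
   and scl: "\<And>c x. AE t in M. \<forall>w. \<Phi> (c *\<^sub>C x) t w = c * \<Phi> x t w"
   and TT: "\<And>k. AE t in M. \<forall>w. \<Phi> (T (f k)) t w = of_real t * \<Phi> (f k) t w"
   and rec: "\<And>n. T (f n) =
         of_real (a n) *\<^sub>C f (n + 2) + b n *\<^sub>C f (n + 1) + of_real (c n) *\<^sub>C f n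
         + (if n \<ge> 1 then cnj (b (n - 1)) *\<^sub>C f (n - 1) else 0)
         + (if n \<ge> 2 then of_real (a (n - 2)) *\<^sub>C f (n - 2) else 0)"
  shows "AE t in M. \<forall>w k. complex_of_real t * \<Phi> (f k) t w = of_real (a k) * \<Phi> (f (k+2)) t w + b k * \<Phi> (f (k+1)) t w
        + of_real (c k) * \<Phi> (f k) t w + (if k \<ge> 1 then cnj (b (k-1)) * \<Phi> (f (k-1)) t w else 0)
        + (if k \<ge> 2 then of_real (a (k-2)) * \<Phi> (f (k-2)) t w else 0)"
proof -
  have "AE t in M. \<forall>w. complex_of_real t * \<Phi> (f k) t w = of_real (a k) * \<Phi> (f (k+2)) t w + b k * \<Phi> (f (k+1)) t w
        + of_real (c k) * \<Phi> (f k) t w + (if k \<ge> 1 then cnj (b (k-1)) * \<Phi> (f (k-1)) t w else 0)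
        + (if k \<ge> 2 then of_real (a (k-2)) * \<Phi> (f (k-2)) t w else 0)" for k
  proof -
    define d1 where "d1 = (if k \<ge> 1 then cnj (b (k-1)) else 0)"
    define d2 where "d2 = (if k \<ge> 2 then complex_of_real (a (k-2)) else 0)"
    define y1 where "y1 = of_real (a k) *\<^sub>C f (k + 2)"
    define y2 where "y2 = b k *\<^sub>C f (k + 1)"
    define y3 where "y3 = of_real (c k) *\<^sub>C f k"
    define y4 where "y4 = d1 *\<^sub>C f (k - 1)"
    define y5 where "y5 = d2 *\<^sub>C f (k - 2)"
    have Tk: "T (f k) = y1 + y2 + y3 + y4 + y5"
      unfolding rec y1_def y2_def y3_def y4_def y5_def d1_def d2_def by simp
    have eq: "(if k \<ge> 1 then cnj (b (k-1)) * z1 else 0) = d1 * z1" "(if k \<ge> 2 then of_real (a (k-2)) * z2 else 0) = d2 * z2" for z1 z2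
      unfolding d1_def d2_def by simp_all
    show ?thesis
      unfolding eq
      using TT[of k] add[of "y1+y2+y3+y4" y5] add[of "y1+y2+y3" y4] add[of "y1+y2" y3] add[of y1 y2]
        scl[of "of_real (a k)" "f (k+2)"] scl[of "b k" "f (k+1)"] scl[of "of_real (c k)" "f k"]
        scl[of d1 "f (k-1)"] scl[of d2 "f (k-2)"]
      unfolding Tk y1_def[symmetric] y2_def[symmetric] y3_def[symmetric] y4_def[symmetric] y5_def[symmetric]
      by eventually_elim auto
  qed
  then have "AE t in M. \<forall>k w. complex_of_real t * \<Phi> (f k) t w = of_real (a k) * \<Phi> (f (k+2)) t w + b k * \<Phi> (f (k+1)) t w
        + of_real (c k) * \<Phi> (f k) t w + (if k \<ge> 1 then cnj (b (k-1)) * \<Phi> (f (k-1)) t w else 0)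
        + (if k \<ge> 2 then of_real (a (k-2)) * \<Phi> (f (k-2)) t w else 0)"
    by (subst AE_all_countable) (rule allI)
  then show ?thesis by eventually_elim blast
qed


context L2ctx begin

lemma cross_int:
  assumes g: "mem g" and h: "mem h"
  shows "integrable \<sigma> (\<lambda>x. fst g x * cnj (fst h x))"
    "integrable \<rho> (\<lambda>x. hform (snd h x) (V x) (snd g x))"
proof -
  note gm = mem_D[OF g] and hm = mem_D[OF h]
  have [measurable]: "fst g \<in> borel_measurable \<sigma>" "fst h \<in> borel_measurable \<sigma>"
     "snd g \<in> borel_measurable \<rho>" "snd h \<in> borel_measurable \<rho>" using gm hm by auto
  have I: "integrable \<sigma> (\<lambda>x. (cmod (fst g x))\<^sup>2 + (cmod (fst h x))\<^sup>2)" using gm hm by auto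
  show "integrable \<sigma> (\<lambda>x. fst g x * cnj (fst h x))"
  proof (rule Bochner_Integration.integrable_bound[OF I], measurable, rule AE_I2)
    fix x
    have "0 \<le> (cmod (fst g x) - cmod (fst h x))\<^sup>2" by simp
    then have "2 * (cmod (fst g x) * cmod (fst h x)) \<le> (cmod (fst g x))\<^sup>2 + (cmod (fst h x))\<^sup>2"
      by (simp add: power2_eq_square algebra_simps)
    moreover have "0 \<le> cmod (fst g x) * cmod (fst h x)" by simp
    ultimately have "cmod (fst g x) * cmod (fst h x) \<le> (cmod (fst g x))\<^sup>2 + (cmod (fst h x))\<^sup>2"
      by linarith
    then show "norm (fst g x * cnj (fst h x)) \<le> norm ((cmod (fst g x))\<^sup>2 + (cmod (fst h x))\<^sup>2)"
      by (simp add: norm_mult)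
  qed
  have J: "integrable \<rho> (\<lambda>x. 2 * Re (hform (snd g x) (V x) (snd g x)) + 2 * Re (hform (snd h x) (V x) (snd h x)))"
    using gm hm by auto
  show "integrable \<rho> (\<lambda>x. hform (snd h x) (V x) (snd g x))"
  proof (rule Bochner_Integration.integrable_bound[OF J], measurable)
    show "AE x in \<rho>. norm (hform (snd h x) (V x) (snd g x))
       \<le> norm (2 * Re (hform (snd g x) (V x) (snd g x)) + 2 * Re (hform (snd h x) (V x) (snd h x)))"
      using V_psd
    proof eventually_elim
      case (elim x)
      have "norm (hform (snd h x) (V x) (snd g x)) \<le> 2 * Re (hform (snd g x) (V x) (snd g x)) + 2 * Re (hform (snd h x) (V x) (snd h x))"
        by (rule cross_bound[OF elim])
      also have "\<dots> \<le> norm (2 * Re (hform (snd g x) (V x) (snd g x)) + 2 * Re (hform (snd h x) (V x) (snd h x)))"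
        by simp
      finally show ?case .
    qed
  qed
qed

end

definition ix :: "2 \<Rightarrow> nat" where "ix i = (if i = 1 then 0 else 1)"

lemma ix_simps[simp]: "ix 1 = 0" "ix 2 = 1" by (simp_all add: ix_def)

lemma ix_eq: "(2 * n + ix i = 2 * m + ix j) \<longleftrightarrow> n = m \<and> i = j"
proof -
  have "i = 1 \<or> i = 2" "j = 1 \<or> j = 2" using exhaust_2 by auto
  then show ?thesis by (auto simp: ix_def; presburger)
qed

theorem theorem6p3:
  fixes T :: "'h::complex_hilbert \<Rightarrow> 'h" and D :: "'h set"
    and f :: "nat \<Rightarrow> 'h"
    and a :: "nat \<Rightarrow> real" and b :: "nat \<Rightarrow> complex" and c :: "nat \<Rightarrow> real"
    and \<Omega>1 \<Omega>2 :: "real set" and \<sigma> \<rho> :: "real measure"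
    and V :: "real \<Rightarrow> cmat2" and U :: "'h \<Rightarrow> l2v"
    and P :: "nat \<Rightarrow> real \<Rightarrow> cmat2"
  assumes sa: "self_adjoint T D"
    and onb: "orthonormal_basis f"
    and fD: "\<And>n. f n \<in> D"
    and a_pos: "\<And>n. a n > 0"
    and rec: "\<And>n. T (f n) =
         of_real (a n) *\<^sub>C f (n + 2) + b n *\<^sub>C f (n + 1) + of_real (c n) *\<^sub>C f n
         + (if n \<ge> 1 then cnj (b (n - 1)) *\<^sub>C f (n - 1) else 0)
         + (if n \<ge> 2 then of_real (a (n - 2)) *\<^sub>C f (n - 2) else 0)"
    and spec: "op_spectrum T D = complex_of_real ` (\<Omega>1 \<union> \<Omega>2)"
    and disj: "\<Omega>1 \<inter> \<Omega>2 = {}"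
    and \<Omega>1_borel: "\<Omega>1 \<in> sets borel" and \<Omega>2_borel: "\<Omega>2 \<in> sets borel"
    and \<sigma>_space: "space \<sigma> = \<Omega>1" and \<sigma>_sets: "sets \<sigma> = sets (restrict_space borel \<Omega>1)"
    and \<rho>_space: "space \<rho> = \<Omega>2" and \<rho>_sets: "sets \<rho> = sets (restrict_space borel \<Omega>2)"
    and V_meas: "V \<in> borel_measurable \<rho>"
    and V_psd: "AE x in \<rho>. psd2 (V x)"
    and U_unitary: "unitary_to_L2V \<sigma> \<rho> V U"
    and UT_MU: "intertwines \<sigma> \<rho> V U T D"
    and P_def: "matrix_orth_polys a b c P"
  defines "W1 \<equiv> \<lambda>x. mk2 ((cmod (fst (U (f 0)) x))\<^sup>2) (fst (U (f 0)) x * cnj (fst (U (f 1)) x))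
                        (cnj (fst (U (f 0)) x) * fst (U (f 1)) x) ((cmod (fst (U (f 1)) x))\<^sup>2)"
    and "W2 \<equiv> \<lambda>x. mk2 (hform (snd (U (f 0)) x) (V x) (snd (U (f 0)) x))
                       (hform (snd (U (f 1)) x) (V x) (snd (U (f 0)) x))
                       (hform (snd (U (f 0)) x) (V x) (snd (U (f 1)) x))
                       (hform (snd (U (f 1)) x) (V x) (snd (U (f 1)) x))"
  shows "integrable \<sigma> (\<lambda>x. P n x ** W1 x ** adj2 (P m x))
       \<and> integrable \<rho> (\<lambda>x. P n x ** W2 x ** adj2 (P m x))
       \<and> (\<integral>x. P n x ** W1 x ** adj2 (P m x) \<partial>\<sigma>) + (\<integral>x. P n x ** W2 x ** adj2 (P m x) \<partial>\<rho>)
           = (if n = m then mat 1 else 0)"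
proof -
  interpret L2ctx \<sigma> \<rho> V by unfold_locales (rule V_meas, rule V_psd)
  have Umem: "\<And>x. mem (U x)" using U_unitary by (simp add: unitary_to_L2V_def)
  have Uadd: "\<And>x y. L2V_eq \<sigma> \<rho> V (U (x + y)) (L2V_add (U x) (U y))" using U_unitary by (simp add: unitary_to_L2V_def)
  have Uscl: "\<And>c x. L2V_eq \<sigma> \<rho> V (U (c *\<^sub>C x)) (L2V_scale c (U x))" using U_unitary by (simp add: unitary_to_L2V_def)
  have Uinn: "\<And>x y. L2V_inner \<sigma> \<rho> V (U x) (U y) = cinner x y" using U_unitary by (simp add: unitary_to_L2V_def)
  have Dchar: "D = {x. mem (L2V_mult (U x))}" and UT: "\<And>x. x \<in> D \<Longrightarrow> L2V_eq \<sigma> \<rho> V (U (T x)) (L2V_mult (U x))"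
    using UT_MU by (auto simp: intertwines_def)
  have Kadd: "\<And>x y. (AE t in \<sigma>. fst (U (x + y)) t = fst (L2V_add (U x) (U y)) t) \<and>
      (AE t in \<rho>. \<forall>w. hform w (V t) (snd (U (x + y)) t) = hform w (V t) (snd (L2V_add (U x) (U y)) t))"
    by (rule K[OF Umem mem_add_diff(1)[OF Umem Umem] Uadd])
  have Kscl: "\<And>c x. (AE t in \<sigma>. fst (U (c *\<^sub>C x)) t = fst (L2V_scale c (U x)) t) \<and>
      (AE t in \<rho>. \<forall>w. hform w (V t) (snd (U (c *\<^sub>C x)) t) = hform w (V t) (snd (L2V_scale c (U x)) t))"
    by (rule K[OF Umem mem_scale[OF Umem] Uscl])
  have KT: "\<And>k. (AE t in \<sigma>. fst (U (T (f k))) t = fst (L2V_mult (U (f k))) t) \<and>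
      (AE t in \<rho>. \<forall>w. hform w (V t) (snd (U (T (f k))) t) = hform w (V t) (snd (L2V_mult (U (f k))) t))"
  proof -
    fix k
    have "mem (L2V_mult (U (f k)))" using fD[of k] Dchar by auto
    then show "?thesis k" by (rule K[OF Umem _ UT[OF fD]])
  qed
  have genS: "AE t in \<sigma>. \<forall>(w::unit) k. complex_of_real t * fst (U (f k)) t = of_real (a k) * fst (U (f (k+2))) t + b k * fst (U (f (k+1))) t
        + of_real (c k) * fst (U (f k)) t + (if k \<ge> 1 then cnj (b (k-1)) * fst (U (f (k-1))) t else 0)
        + (if k \<ge> 2 then of_real (a (k-2)) * fst (U (f (k-2))) t else 0)"
  proof (rule gen[where \<Phi>="\<lambda>x t (w::unit). fst (U x) t" and T=T, OF _ _ _ rec])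
    show "AE t in \<sigma>. \<forall>w::unit. fst (U (x + y)) t = fst (U x) t + fst (U y) t" for x y
      using conjunct1[OF Kadd[of x y]] by eventually_elim (simp add: L2V_add_def)
    show "AE t in \<sigma>. \<forall>w::unit. fst (U (c *\<^sub>C x)) t = c * fst (U x) t" for c x
      using conjunct1[OF Kscl[of c x]] by eventually_elim (simp add: L2V_scale_def)
    show "AE t in \<sigma>. \<forall>w::unit. fst (U (T (f k))) t = complex_of_real t * fst (U (f k)) t" for k
      using conjunct1[OF KT[of k]] by eventually_elim (simp add: L2V_mult_def)
  qed
  have genR: "AE t in \<rho>. \<forall>w k. complex_of_real t * hform w (V t) (snd (U (f k)) t) = of_real (a k) * hform w (V t) (snd (U (f (k+2))) t)
        + b k * hform w (V t) (snd (U (f (k+1))) t)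
        + of_real (c k) * hform w (V t) (snd (U (f k)) t) + (if k \<ge> 1 then cnj (b (k-1)) * hform w (V t) (snd (U (f (k-1))) t) else 0)
        + (if k \<ge> 2 then of_real (a (k-2)) * hform w (V t) (snd (U (f (k-2))) t) else 0)"
  proof (rule gen[where \<Phi>="\<lambda>x t w. hform w (V t) (snd (U x) t)" and T=T, OF _ _ _ rec])
    show "AE t in \<rho>. \<forall>w. hform w (V t) (snd (U (x + y)) t) = hform w (V t) (snd (U x) t) + hform w (V t) (snd (U y) t)" for x y
      using conjunct2[OF Kadd[of x y]] by eventually_elim (simp add: L2V_add_def hform_add_right)
    show "AE t in \<rho>. \<forall>w. hform w (V t) (snd (U (c *\<^sub>C x)) t) = c * hform w (V t) (snd (U x) t)" for c x
      using conjunct2[OF Kscl[of c x]] by eventually_elim (simp add: L2V_scale_def hform_scale_right)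
    show "AE t in \<rho>. \<forall>w. hform w (V t) (snd (U (T (f k))) t) = complex_of_real t * hform w (V t) (snd (U (f k)) t)" for k
      using conjunct2[OF KT[of k]] by eventually_elim (simp add: L2V_mult_def hform_scale_right)
  qed
  have algS: "AE t in \<sigma>. \<forall>n i. fst (U (f (2*n + ix i))) t = P n t $ i $ 1 * fst (U (f 0)) t + P n t $ i $ 2 * fst (U (f 1)) t"
    using genS
  proof eventually_elim
    case (elim t)
    have r: "\<And>k. complex_of_real t * fst (U (f k)) t = of_real (a k) * fst (U (f (k+2))) t + b k * fst (U (f (k+1))) t
        + of_real (c k) * fst (U (f k)) t + (if k \<ge> 1 then cnj (b (k-1)) * fst (U (f (k-1))) t else 0)
        + (if k \<ge> 2 then of_real (a (k-2)) * fst (U (f (k-2))) t else 0)" using elim by blast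
    show ?case
    proof (intro allI)
      fix n and i :: 2
      have A: "fst (U (f (2*n))) t = P n t $1$1 * fst (U (f 0)) t + P n t $1$2 * fst (U (f 1)) t \<and>
          fst (U (f (2*n+1))) t = P n t $2$1 * fst (U (f 0)) t + P n t $2$2 * fst (U (f 1)) t"
        by (rule alg[OF P_def a_pos, where s="\<lambda>k. fst (U (f k)) t"]) (rule r)
      have "i = 1 \<or> i = 2" using exhaust_2 by auto
      then show "fst (U (f (2*n + ix i))) t = P n t $ i $ 1 * fst (U (f 0)) t + P n t $ i $ 2 * fst (U (f 1)) t"
        using A by auto
    qed
  qed
  have algR: "AE t in \<rho>. \<forall>n i w. hform w (V t) (snd (U (f (2*n + ix i))) t) = P n t $ i $ 1 * hform w (V t) (snd (U (f 0)) t) + P n t $ i $ 2 * hform w (V t) (snd (U (f 1)) t)"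
    using genR
  proof eventually_elim
    case (elim t)
    show ?case
    proof (intro allI)
      fix n and i :: 2 and w
      have r: "\<And>k. complex_of_real t * hform w (V t) (snd (U (f k)) t) = of_real (a k) * hform w (V t) (snd (U (f (k+2))) t)
        + b k * hform w (V t) (snd (U (f (k+1))) t)
        + of_real (c k) * hform w (V t) (snd (U (f k)) t) + (if k \<ge> 1 then cnj (b (k-1)) * hform w (V t) (snd (U (f (k-1))) t) else 0)
        + (if k \<ge> 2 then of_real (a (k-2)) * hform w (V t) (snd (U (f (k-2))) t) else 0)" using elim by blast
      have A: "hform w (V t) (snd (U (f (2*n))) t) = P n t $1$1 * hform w (V t) (snd (U (f 0)) t) + P n t $1$2 * hform w (V t) (snd (U (f 1)) t) \<and>
          hform w (V t) (snd (U (f (2*n+1))) t) = P n t $2$1 * hform w (V t) (snd (U (f 0)) t) + P n t $2$2 * hform w (V t) (snd (U (f 1)) t)"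
        by (rule alg[OF P_def a_pos, where s="\<lambda>k. hform w (V t) (snd (U (f k)) t)"]) (rule r)
      have "i = 1 \<or> i = 2" using exhaust_2 by auto
      then show "hform w (V t) (snd (U (f (2*n + ix i))) t) = P n t $ i $ 1 * hform w (V t) (snd (U (f 0)) t) + P n t $ i $ 2 * hform w (V t) (snd (U (f 1)) t)"
        using A by auto
    qed
  qed
  have PmS[measurable]: "(\<lambda>t. P k t $ i $ j) \<in> borel_measurable \<sigma>" for k i j
  proof -
    have "(\<lambda>t. P k t $ i $ j) \<in> borel_measurable (restrict_space borel \<Omega>1)"
      by (rule measurable_restrict_space1[OF P_meas[OF P_def a_pos]])
    then show ?thesis by (subst measurable_cong_sets[OF \<sigma>_sets refl])
  qed
  have PmR[measurable]: "(\<lambda>t. P k t $ i $ j) \<in> borel_measurable \<rho>" for k i j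
  proof -
    have "(\<lambda>t. P k t $ i $ j) \<in> borel_measurable (restrict_space borel \<Omega>2)"
      by (rule measurable_restrict_space1[OF P_meas[OF P_def a_pos]])
    then show ?thesis by (subst measurable_cong_sets[OF \<rho>_sets refl])
  qed
  have UmS[measurable]: "fst (U x) \<in> borel_measurable \<sigma>" for x using mem_D[OF Umem] by blast
  have UmR[measurable]: "snd (U x) \<in> borel_measurable \<rho>" for x using mem_D[OF Umem] by blast
  define eS where "eS i j t = (P n t ** W1 t ** adj2 (P m t)) $ i $ j" for i j t
  define eR where "eR i j t = (P n t ** W2 t ** adj2 (P m t)) $ i $ j" for i j t
  have eS_meas[measurable]: "eS i j \<in> borel_measurable \<sigma>" for i j
    unfolding eS_def W1_def by (simp only: mult_nth2 adj2_nth mk2_nth) measurable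
  have eR_meas[measurable]: "eR i j \<in> borel_measurable \<rho>" for i j
    unfolding eR_def W2_def by (simp only: mult_nth2 adj2_nth mk2_nth) measurable
  have eS_ae: "AE t in \<sigma>. eS i j t = fst (U (f (2*n + ix i))) t * cnj (fst (U (f (2*m + ix j))) t)" for i j
    using algS
  proof eventually_elim
    case (elim t)
    show ?case unfolding eS_def W1_def
      by (rule entry_sigma) (use elim in blast)+
  qed
  have eR_ae: "AE t in \<rho>. eR i j t = hform (snd (U (f (2*m + ix j))) t) (V t) (snd (U (f (2*n + ix i))) t)" for i j
    using algR V_psd
  proof eventually_elim
    case (elim t)
    show ?case unfolding eR_def W2_def
      by (rule entry_rho[OF elim(2)]) (use elim(1) in blast)+
  qed
  have intS: "integrable \<sigma> (eS i j)" and intR: "integrable \<rho> (eR i j)"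
    and sumE: "integral\<^sup>L \<sigma> (eS i j) + integral\<^sup>L \<rho> (eR i j) = (if n = m \<and> i = j then 1 else 0)" for i j
  proof -
    let ?k = "2*n + ix i" and ?l = "2*m + ix j"
    note ci = cross_int[OF Umem[of "f ?k"] Umem[of "f ?l"]]
    show "integrable \<sigma> (eS i j)"
      by (rule integrable_cong_AE_imp[OF ci(1) eS_meas]) (rule AE_mp[OF eS_ae[of i j]], rule AE_I2, auto)
    show "integrable \<rho> (eR i j)"
      by (rule integrable_cong_AE_imp[OF ci(2) eR_meas]) (rule AE_mp[OF eR_ae[of i j]], rule AE_I2, auto)
    have "integral\<^sup>L \<sigma> (eS i j) = (\<integral>t. fst (U (f ?k)) t * cnj (fst (U (f ?l)) t) \<partial>\<sigma>)"
      by (rule integral_cong_AE) (measurable, rule eS_ae)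
    moreover have "integral\<^sup>L \<rho> (eR i j) = (\<integral>t. hform (snd (U (f ?l)) t) (V t) (snd (U (f ?k)) t) \<partial>\<rho>)"
      by (rule integral_cong_AE) (measurable, rule eR_ae)
    ultimately have "integral\<^sup>L \<sigma> (eS i j) + integral\<^sup>L \<rho> (eR i j) = L2V_inner \<sigma> \<rho> V (U (f ?k)) (U (f ?l))"
      by (simp add: L2V_inner_def)
    also have "\<dots> = cinner (f ?k) (f ?l)" by (rule Uinn)
    also have "\<dots> = (if ?k = ?l then 1 else 0)" using onb by (simp add: orthonormal_basis_def)
    also have "\<dots> = (if n = m \<and> i = j then 1 else 0)" by (simp only: ix_eq)
    finally show "integral\<^sup>L \<sigma> (eS i j) + integral\<^sup>L \<rho> (eR i j) = (if n = m \<and> i = j then 1 else 0)" .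
  qed
  have FS: "(\<lambda>t. P n t ** W1 t ** adj2 (P m t)) = (\<lambda>t. mk2 (eS 1 1 t) (eS 1 2 t) (eS 2 1 t) (eS 2 2 t))"
    by (rule ext) (unfold eS_def, rule mk2_eta)
  have FR: "(\<lambda>t. P n t ** W2 t ** adj2 (P m t)) = (\<lambda>t. mk2 (eR 1 1 t) (eR 1 2 t) (eR 2 1 t) (eR 2 2 t))"
    by (rule ext) (unfold eR_def, rule mk2_eta)
  note mS = integrable_mk2[OF intS intS intS intS, of 1 1 1 2 2 1 2 2]
  note mR = integrable_mk2[OF intR intR intR intR, of 1 1 1 2 2 1 2 2]
  show ?thesis
    unfolding FS FR
  proof (intro conjI)
    show "integrable \<sigma> (\<lambda>t. mk2 (eS 1 1 t) (eS 1 2 t) (eS 2 1 t) (eS 2 2 t))" by (rule mS(1))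
    show "integrable \<rho> (\<lambda>t. mk2 (eR 1 1 t) (eR 1 2 t) (eR 2 1 t) (eR 2 2 t))" by (rule mR(1))
    show "(\<integral>t. mk2 (eS 1 1 t) (eS 1 2 t) (eS 2 1 t) (eS 2 2 t) \<partial>\<sigma>) + (\<integral>t. mk2 (eR 1 1 t) (eR 1 2 t) (eR 2 1 t) (eR 2 2 t) \<partial>\<rho>) =
        (if n = m then mat 1 else 0)"
      unfolding mS(2) mR(2) using sumE[of 1 1] sumE[of 1 2] sumE[of 2 1] sumE[of 2 2]
      by (simp add: mat_eq2)
  qed
qed

end
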